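(* Let $G=(V,D,B)$ be a mixed graph. The Jacobian $J_G(0,I)$ of the covariance parametrization $\phi_G$, evaluated at $\Lambda=0$ and $\Omega=I$, has full column rank $|V|+|B|+|D|$ if and only if $G$ is simple.
   Context: A mixed graph with finite vertex set $V$ is a triple $G=(V,D,B)$ with $D$ a set of ordered pairs $(i,j)$, $i\ne j$ (directed edges $i\to j$) and $B$ a set of unordered pairs $\{i,j\}$, $i\ne j$ (bidirected edges); in general a pair of nodes may be joined by several edges (e.g. both $i\to j$ and $j\to i$, or $i\to j$ and $i\leftrightarrow j$). $G$ is simple if any two distinct nodes are joined by at most one edge of any type. $\mathbb{R}^D_{\mathrm{reg}}$ is the set of real $V\times V$ matrices $\Lambda$ with $\lambda_{ij}=0$ for $(i,j)\notin D$ and $I-\Lambda$ invertible; $\mathit{PD}(B)$ is the set of positive definite symmetric matrices $\Omega$ with $\omega_{ij}=0$ for $i\ne j$, $\{i,j\}\notin B$. The covariance parametrization is $\phi_G(\Lambda,\Omega)=(I-\Lambda)^{-T}\Omega(I-\Lambda)^{-1}$ on $\mathbb{R}^D_{\mathrm{reg}}\times\mathit{PD}(B)$, and $J_G$ is its Jacobian with respect to the $|D|+|V|+|B|$ free parameters $\lambda_{kl}$ ($(k,l)\in D$), $\omega_{ii}$ ($i\in V$), $\omega_{ij}$ ($\{i,j\}\in B$). *)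

theory Defs
  imports "HOL-Analysis.Analysis"
begin

definition mixed_graph :: "('v \<times> 'v) set \<Rightarrow> 'v set set \<Rightarrow> bool" where
  "mixed_graph D B \<longleftrightarrow> (\<forall>(i,j)\<in>D. i \<noteq> j) \<and> (\<forall>e\<in>B. \<exists>i j. i \<noteq> j \<and> e = {i,j})"

text \<open>Simple: any two distinct nodes joined by at most one edge (of any type).
  Since D and B are sets, the only possible multiple edges are i\<rightarrow>j with j\<rightarrow>i,
  or a directed edge together with a bidirected edge on the same pair.\<close>

definition simple_mixed_graph :: "('v \<times> 'v) set \<Rightarrow> 'v set set \<Rightarrow> bool" where
  "simple_mixed_graph D B \<longleftrightarrow>
     (\<forall>i j. \<not> ((i,j) \<in> D \<and> (j,i) \<in> D)) \<and> (\<forall>i j. \<not> ((i,j) \<in> D \<and> {i,j} \<in> B))"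

definition cov_param :: "real^'v^'v \<Rightarrow> real^'v^'v \<Rightarrow> real^'v^'v" where
  "cov_param L W = transpose (matrix_inv (mat 1 - L)) ** W ** matrix_inv (mat 1 - L)"

datatype 'v param = PLam 'v 'v | POmDiag 'v | POmBi "'v set"

definition params :: "('v \<times> 'v) set \<Rightarrow> 'v set set \<Rightarrow> 'v param set" where
  "params D B = {PLam k l | k l. (k,l) \<in> D} \<union> range POmDiag \<union> POmBi ` B"

definition unit_mat :: "'v \<Rightarrow> 'v \<Rightarrow> real^'v^'v" where
  "unit_mat i j = (\<chi> a b. if a = i \<and> b = j then 1 else 0)"

text \<open>Direction in (Lambda, Omega)-space corresponding to increasing one free parameter
  (for a symmetric off-diagonal omega_ij both entries (i,j) and (j,i) move).\<close>

fun param_dir :: "'v param \<Rightarrow> (real^'v^'v) \<times> (real^'v^'v)" where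
  "param_dir (PLam k l) = (unit_mat k l, 0)"
| "param_dir (POmDiag i) = (0, unit_mat i i)"
| "param_dir (POmBi e) =
     (0, (\<Sum>(i,j) \<in> {(i,j). i \<noteq> j \<and> e = {i,j}}. unit_mat i j))"

definition jac_col :: "real^'v^'v \<Rightarrow> real^'v^'v \<Rightarrow> 'v param \<Rightarrow> real^'v^'v" where
  "jac_col L W \<theta> = vector_derivative
     (\<lambda>t::real. cov_param (L + t *\<^sub>R fst (param_dir \<theta>)) (W + t *\<^sub>R snd (param_dir \<theta>))) (at 0)"

definition jac_full_col_rank :: "('v \<times> 'v) set \<Rightarrow> 'v set set \<Rightarrow> real^'v^'v \<Rightarrow> real^'v^'v \<Rightarrow> bool" where
  "jac_full_col_rank D B L W \<longleftrightarrow>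
     (\<forall>c :: 'v param \<Rightarrow> real.
        (\<Sum>\<theta>\<in>params D B. c \<theta> *\<^sub>R jac_col L W \<theta>) = 0 \<longrightarrow> (\<forall>\<theta>\<in>params D B. c \<theta> = 0))"

end

theory Submission
  imports Defs
begin

lemma minv_unique:
  fixes A B :: "real^'n^'n"
  assumes "A ** B = mat 1" "B ** A = mat 1"
  shows "matrix_inv A = B"
proof -
  have ex: "\<exists>A'. A ** A' = mat 1 \<and> A' ** A = mat 1" using assms by blast
  define A' where "A' = matrix_inv A"
  have h: "A ** A' = mat 1 \<and> A' ** A = mat 1"
    unfolding A'_def matrix_inv_def by (rule someI_ex[OF ex])
  have "A' = A' ** (A ** B)" using assms by (simp add: matrix_mul_rid)
  also have "\<dots> = (A' ** A) ** B" by (simp add: matrix_mul_assoc)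
  also have "\<dots> = B" using h by (simp add: matrix_mul_lid)
  finally show ?thesis unfolding A'_def .
qed

lemma mm_add_r: "((A::real^'n^'m) + B) ** (C::real^'k^'n) = A ** C + B ** C"
  by (simp add: matrix_matrix_mult_def vec_eq_iff sum.distrib algebra_simps)
lemma mm_diff_r: "((A::real^'n^'m) - B) ** (C::real^'k^'n) = A ** C - B ** C"
  by (simp add: matrix_matrix_mult_def vec_eq_iff sum_subtractf algebra_simps)
lemma mm_diff_l: "(C::real^'n^'m) ** ((A::real^'k^'n) - B) = C ** A - C ** B"
  by (simp add: matrix_matrix_mult_def vec_eq_iff sum_subtractf algebra_simps)

lemma tr_add: "transpose ((A::real^'n^'m) + B) = transpose A + transpose B"
  by (simp add: transpose_def vec_eq_iff)
lemma tr_scale: "transpose (c *\<^sub>R (A::real^'n^'m)) = c *\<^sub>R transpose A"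
  by (simp add: transpose_def vec_eq_iff)

lemma um_sq: "k \<noteq> l \<Longrightarrow> unit_mat k l ** unit_mat k l = (0::real^'v::finite^'v)"
  by (auto simp: vec_eq_iff matrix_matrix_mult_def unit_mat_def intro!: sum.neutral)

lemma inv_lam:
  fixes M :: "real^'v::finite^'v"
  assumes "M ** M = 0"
  shows "matrix_inv (mat 1 - M) = mat 1 + M"
  apply (rule minv_unique)
  using assms by (simp_all add: matrix_add_ldistrib mm_add_r mm_diff_l mm_diff_r)

lemma cov_lam:
  fixes M :: "real^'v::finite^'v"
  assumes "M ** M = 0"
  shows "cov_param (t *\<^sub>R M) (mat 1) = mat 1 + t *\<^sub>R (M + transpose M) + (t^2) *\<^sub>R (transpose M ** M)"
proof -
  have "(t *\<^sub>R M) ** (t *\<^sub>R M) = 0" using assms by (simp add: matrix_scalar_ac flip: scalar_matrix_assoc)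
  then have "matrix_inv (mat 1 - t *\<^sub>R M) = mat 1 + t *\<^sub>R M" by (rule inv_lam)
  then show ?thesis unfolding cov_param_def
    by (simp add: tr_add tr_scale matrix_add_ldistrib mm_add_r 
       matrix_scalar_ac transpose_mat power2_eq_square algebra_simps flip: scalar_matrix_assoc)
qed

lemma cov_om: "cov_param 0 (W::real^'v::finite^'v) = W"
proof -
  have "matrix_inv (mat 1 :: real^'v^'v) = mat 1" by (rule minv_unique) simp_all
  then show ?thesis unfolding cov_param_def by (simp add: transpose_mat)
qed

lemma der_quad:
  fixes A B C :: "real^'v::finite^'v"
  shows "vector_derivative (\<lambda>t. A + t *\<^sub>R B + (t^2) *\<^sub>R C) (at 0) = B"
proof -
  have "((\<lambda>t. A + t *\<^sub>R B + (t^2) *\<^sub>R C) has_vector_derivative (0 + 1 *\<^sub>R B + (2 * 0) *\<^sub>R C)) (at 0)"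
    by (intro derivative_eq_intros) (auto simp: power2_eq_square)
  then show ?thesis by (intro vector_derivative_at) simp
qed

definition hit :: "'v param \<Rightarrow> 'v \<Rightarrow> 'v \<Rightarrow> bool" where
  "hit \<theta> a b \<longleftrightarrow> \<theta> = PLam a b \<or> \<theta> = PLam b a \<or> (a \<noteq> b \<and> \<theta> = POmBi {a,b}) \<or> (a = b \<and> \<theta> = POmDiag a)"

lemma jac_lam:
  assumes "k \<noteq> l"
  shows "jac_col 0 (mat 1) (PLam k l) = unit_mat k l + transpose (unit_mat k l :: real^'v::finite^'v)"
proof -
  have "(\<lambda>t::real. cov_param (0 + t *\<^sub>R fst (param_dir (PLam k l))) (mat 1 + t *\<^sub>R snd (param_dir (PLam k l))))
     = (\<lambda>t. mat 1 + t *\<^sub>R (unit_mat k l + transpose (unit_mat k l)) + (t^2) *\<^sub>R (transpose (unit_mat k l) ** unit_mat k l))"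
    using cov_lam[OF um_sq[OF assms]] by simp
  then show ?thesis unfolding jac_col_def by (simp only: der_quad)
qed

lemma jac_om:
  assumes "fst (param_dir \<theta>) = (0::real^'v::finite^'v)"
  shows "jac_col 0 (mat 1) \<theta> = snd (param_dir \<theta>)"
proof -
  have "(\<lambda>t::real. cov_param (0 + t *\<^sub>R fst (param_dir \<theta>)) (mat 1 + t *\<^sub>R snd (param_dir \<theta>)))
     = (\<lambda>t. mat 1 + t *\<^sub>R snd (param_dir \<theta>) + (t^2) *\<^sub>R 0)"
    using assms by (simp add: cov_om)
  then show ?thesis unfolding jac_col_def by (simp only: der_quad)
qed

lemma params_finite: "finite (params D (B::'v::finite set set))"
proof -
  have "{PLam k l | k l. (k,l) \<in> D} = (\<lambda>(k,l). PLam k l) ` D" by auto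
  then show ?thesis unfolding params_def by (intro finite_UnI finite_imageI) auto
qed

lemma jac_entry:
  assumes "mixed_graph D B" "\<theta> \<in> params D B"
  shows "jac_col 0 (mat 1) \<theta> $ a $ b = (if hit \<theta> a b then 1 else (0::real))"
proof -
  consider (L) k l where "(k,l) \<in> D" "\<theta> = PLam k l" | (O) i where "\<theta> = POmDiag i" | (Bi) e where "e \<in> B" "\<theta> = POmBi e"
    using assms(2) unfolding params_def by auto
  then show ?thesis
  proof cases
    case L
    then have "k \<noteq> l" using assms(1) unfolding mixed_graph_def by auto
    moreover have "hit (PLam k l) a b \<longleftrightarrow> (a=k\<and>b=l) \<or> (a=l\<and>b=k)" by (auto simp: hit_def)
    ultimately show ?thesis using L by (simp add: jac_lam unit_mat_def transpose_def)
  next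
    case O
    moreover have "hit (POmDiag i) a b \<longleftrightarrow> (a=i\<and>b=i)" by (auto simp: hit_def)
    ultimately show ?thesis by (simp add: jac_om unit_mat_def)
  next
    case Bi
    then obtain i j where ij: "i \<noteq> j" "e = {i,j}" using assms(1) unfolding mixed_graph_def by blast
    define S where "S = {(i,j). i \<noteq> j \<and> e = {i,j}}"
    have fS: "finite S" by simp
    have "snd (param_dir \<theta>) $ a $ b = (\<Sum>p\<in>S. (if p = (a,b) then 1 else 0::real))"
    proof -
      have "snd (param_dir \<theta>) = (\<Sum>p\<in>S. unit_mat (fst p) (snd p))" unfolding Bi S_def by (simp add: case_prod_beta')
      then have "snd (param_dir \<theta>) $ a $ b = (\<Sum>p\<in>S. unit_mat (fst p) (snd p) $ a $ b)" by (simp add: sum_component)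
      also have "\<dots> = (\<Sum>p\<in>S. (if p = (a,b) then 1 else 0::real))"
        by (intro sum.cong refl) (auto simp: unit_mat_def)
      finally show ?thesis .
    qed
    also have "\<dots> = (if (a,b) \<in> S then 1 else 0)" using fS by (simp add: sum.delta')
    also have "\<dots> = (if hit \<theta> a b then 1 else 0)"
      unfolding S_def hit_def Bi by simp
    finally show ?thesis using Bi by (simp add: jac_om)
  qed
qed

lemma sum_entry:
  assumes "mixed_graph D B"
  shows "(\<Sum>\<theta>\<in>params D B. c \<theta> *\<^sub>R jac_col 0 (mat 1) \<theta>) $ a $ b
     = (\<Sum>\<theta>\<in>params D B. if hit \<theta> a b then c \<theta> else 0)"
proof -
  have "(\<Sum>\<theta>\<in>params D B. c \<theta> *\<^sub>R jac_col 0 (mat 1) \<theta>) $ a $ b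
     = (\<Sum>\<theta>\<in>params D B. c \<theta> * (jac_col 0 (mat 1) \<theta> $ a $ b))" by (simp add: sum_component)
  also have "\<dots> = (\<Sum>\<theta>\<in>params D B. if hit \<theta> a b then c \<theta> else 0)"
    by (intro sum.cong refl) (simp add: jac_entry[OF assms])
  finally show ?thesis .
qed

lemma sum_two:
  assumes "finite P" "x \<in> P" "y \<in> P" "x \<noteq> y" "\<forall>z\<in>P. z \<noteq> x \<and> z \<noteq> y \<longrightarrow> f z = (0::real)"
  shows "sum f P = f x + f y"
proof -
  have "sum f P = sum f {x,y}" using assms by (intro sum.mono_neutral_right) auto
  then show ?thesis using assms(4) by simp
qed

lemma same_cols:
  assumes "mixed_graph D B" "t1 \<in> params D B" "t2 \<in> params D B" "t1 \<noteq> t2"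
    and "\<And>a b. hit t1 a b \<longleftrightarrow> hit t2 a b"
  shows "\<not> jac_full_col_rank D B 0 (mat 1)"
proof
  assume fr: "jac_full_col_rank D B 0 (mat 1)"
  define c where "c = (\<lambda>\<theta>. if \<theta> = t1 then 1 else if \<theta> = t2 then -1 else (0::real))"
  have "(\<Sum>\<theta>\<in>params D B. c \<theta> *\<^sub>R jac_col 0 (mat 1) \<theta>) = 0"
  proof (subst vec_eq_iff, intro allI, subst vec_eq_iff, intro allI)
    fix a b
    have "(\<Sum>\<theta>\<in>params D B. if hit \<theta> a b then c \<theta> else 0)
      = (if hit t1 a b then c t1 else 0) + (if hit t2 a b then c t2 else 0)"
      using assms(2-4) params_finite by (intro sum_two) (auto simp: c_def)
    also have "\<dots> = 0" using assms(4) assms(5)[of a b] by (simp add: c_def)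
    finally show "(\<Sum>\<theta>\<in>params D B. c \<theta> *\<^sub>R jac_col 0 (mat 1) \<theta>) $ a $ b = 0 $ a $ b"
      by (simp only: sum_entry[OF assms(1)] zero_index)
  qed
  then have "c t1 = 0" using fr assms(2) unfolding jac_full_col_rank_def by blast
  then show False by (simp add: c_def)
qed

lemma uniq_hit:
  assumes "mixed_graph D B" "simple_mixed_graph D B" "t0 \<in> params D B"
  shows "\<exists>a b. {\<theta>\<in>params D B. hit \<theta> a b} = {t0}"
proof -
  consider (L) k l where "(k,l) \<in> D" "t0 = PLam k l" | (O) i where "t0 = POmDiag i" | (Bi) e where "e \<in> B" "t0 = POmBi e"
    using assms(3) unfolding params_def by auto
  then show ?thesis
  proof cases
    case L
    then have kl: "k \<noteq> l" using assms(1) unfolding mixed_graph_def by auto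
    have n1: "(l,k) \<notin> D" "{k,l} \<notin> B" using assms(2) L unfolding simple_mixed_graph_def by auto
    have "{\<theta>\<in>params D B. hit \<theta> k l} = {t0}"
    proof (intro equalityI subsetI)
      fix \<theta> assume "\<theta> \<in> {\<theta>\<in>params D B. hit \<theta> k l}"
      then have "\<theta> \<in> params D B" "hit \<theta> k l" by auto
      then show "\<theta> \<in> {t0}" using n1 kl L unfolding hit_def params_def by auto
    next
      fix \<theta> assume "\<theta> \<in> {t0}"
      then show "\<theta> \<in> {\<theta>\<in>params D B. hit \<theta> k l}" using assms(3) L by (simp add: hit_def)
    qed
    then show ?thesis by blast
  next
    case O
    have "{\<theta>\<in>params D B. hit \<theta> i i} = {t0}"
    proof (intro equalityI subsetI)
      fix \<theta> assume "\<theta> \<in> {\<theta>\<in>params D B. hit \<theta> i i}"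
      then have "\<theta> \<in> params D B" "hit \<theta> i i" by auto
      then show "\<theta> \<in> {t0}" using assms(1) O unfolding hit_def params_def mixed_graph_def by auto
    next
      fix \<theta> assume "\<theta> \<in> {t0}"
      then show "\<theta> \<in> {\<theta>\<in>params D B. hit \<theta> i i}" using assms(3) O by (simp add: hit_def)
    qed
    then show ?thesis by blast
  next
    case Bi
    then obtain i j where ij: "i \<noteq> j" "e = {i,j}" using assms(1) unfolding mixed_graph_def by blast
    have n1: "(i,j) \<notin> D" "(j,i) \<notin> D" using assms(2) Bi ij unfolding simple_mixed_graph_def
      by (metis insert_commute)+
    have "{\<theta>\<in>params D B. hit \<theta> i j} = {t0}"
    proof (intro equalityI subsetI)
      fix \<theta> assume "\<theta> \<in> {\<theta>\<in>params D B. hit \<theta> i j}"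
      then have "\<theta> \<in> params D B" "hit \<theta> i j" by auto
      then show "\<theta> \<in> {t0}" using n1 ij Bi unfolding hit_def params_def by auto
    next
      fix \<theta> assume "\<theta> \<in> {t0}"
      then show "\<theta> \<in> {\<theta>\<in>params D B. hit \<theta> i j}" using assms(3) Bi ij by (simp add: hit_def)
    qed
    then show ?thesis by blast
  qed
qed

theorem lemma2:
  fixes D :: "('v::finite \<times> 'v) set" and B :: "'v set set"
  assumes "mixed_graph D B"
  shows "jac_full_col_rank D B 0 (mat 1) \<longleftrightarrow> simple_mixed_graph D B"
proof
  assume fr: "jac_full_col_rank D B 0 (mat 1)"
  show "simple_mixed_graph D B" unfolding simple_mixed_graph_def
  proof (intro conjI allI notI)
    fix i j assume h: "(i,j) \<in> D \<and> (j,i) \<in> D"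
    then have "i \<noteq> j" using assms unfolding mixed_graph_def by auto
    moreover have "PLam i j \<in> params D B" "PLam j i \<in> params D B" using h unfolding params_def by auto
    moreover have "\<And>a b. hit (PLam i j) a b \<longleftrightarrow> hit (PLam j i) a b" by (auto simp: hit_def)
    ultimately show False using same_cols[OF assms, of "PLam i j" "PLam j i"] fr by auto
  next
    fix i j assume h: "(i,j) \<in> D \<and> {i,j} \<in> B"
    then have ij: "i \<noteq> j" using assms unfolding mixed_graph_def by auto
    have "PLam i j \<in> params D B" "POmBi {i,j} \<in> params D B" using h unfolding params_def by auto
    moreover have "\<And>a b. hit (PLam i j) a b \<longleftrightarrow> hit (POmBi {i,j}) a b"
      using ij unfolding hit_def by (auto simp: doubleton_eq_iff)
    ultimately show False using same_cols[OF assms, of "PLam i j" "POmBi {i,j}"] fr by auto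
  qed
next
  assume s: "simple_mixed_graph D B"
  show "jac_full_col_rank D B 0 (mat 1)" unfolding jac_full_col_rank_def
  proof (intro allI impI ballI)
    fix c t0 assume z: "(\<Sum>\<theta>\<in>params D B. c \<theta> *\<^sub>R jac_col 0 (mat 1) \<theta>) = 0" and t0: "t0 \<in> params D B"
    obtain a b where ab: "{\<theta>\<in>params D B. hit \<theta> a b} = {t0}" using uniq_hit[OF assms s t0] by blast
    have "0 = (\<Sum>\<theta>\<in>params D B. c \<theta> *\<^sub>R jac_col 0 (mat 1) \<theta>) $ a $ b" using z by simp
    also have "\<dots> = (\<Sum>\<theta>\<in>params D B. if hit \<theta> a b then c \<theta> else 0)" by (rule sum_entry[OF assms])
    also have "\<dots> = sum c {\<theta>\<in>params D B. hit \<theta> a b}" by (rule sum.inter_filter[OF params_finite, symmetric])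
    also have "\<dots> = c t0" using ab by simp
    finally show "c t0 = 0" by simp
  qed
qed

end
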